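(* Consider a Clifford circuit $C=U_d\cdots U_1$ of depth $d$ consisting of nearest-neighbor two-qubit Clifford gates on qubits located at the sites of a $D$-dimensional lattice, and let $C_t=U_t\cdots U_1$ ($C_0=I$). For any error configuration $b$, i.e. any subset of noise locations $(i,t)$ (qubit $i$, after layer $t$), let $M_b$ be the set of Pauli operators $C_t^\dagger X_iC_t$ and $C_t^\dagger Z_iC_t$ over all $(i,t)\in b$, and let $\langle M_b\rangle$ be the group they generate. Partition the lattice into hypercubic sublattices of side length $2d$ and let $G=(V,E)$ be the graph whose vertices are the sublattices, with two sublattices joined by an edge if they are adjacent (including diagonally adjacent). Let $A\subseteq V$ be the largest connected component in $G$ such that each sublattice of $A$ contains at least one non-depolarized qubit. Then there exists a Pauli operator $s$ in the centralizer $\mathsf C(\langle M_b\rangle)$ whose support meets at least half of the sublattices in $A$ and which has no support outside of (the qubits of) $A$.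
   Context: A qubit $i$ is depolarized (for configuration $b$) if both $X_i$ and $Z_i$ belong to $\langle M_b\rangle$, and non-depolarized otherwise; here $X_i$ ($Z_i$) denotes $X$ ($Z$) on qubit $i$ and identity elsewhere. The centralizer $\mathsf C(H)$ of a group $H$ of Pauli operators is the set of (phaseless) Pauli operators commuting with every element of $H$. The support of a Pauli operator is the set of qubits on which it acts non-trivially. *)

theory Defs
  imports Main
begin

text \<open>A single-qubit phaseless Pauli is a pair (x-bit, z-bit):
  I = (False,False), X = (True,False), Z = (False,True), Y = (True,True).
  A phaseless Pauli operator on qubits of type 's is a map 's => bool * bool
  (identity wherever the value is (False,False)).\<close>

type_synonym pauli1 = "bool \<times> bool"
type_synonym 's pauli = "'s \<Rightarrow> pauli1"

definition pI :: "'s pauli" where "pI = (\<lambda>k. (False, False))"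

definition pX :: "'s \<Rightarrow> 's pauli" where
  "pX i = (\<lambda>k. if k = i then (True, False) else (False, False))"

definition pZ :: "'s \<Rightarrow> 's pauli" where
  "pZ i = (\<lambda>k. if k = i then (False, True) else (False, False))"

definition add1 :: "pauli1 \<Rightarrow> pauli1 \<Rightarrow> pauli1" where
  "add1 a b = (fst a \<noteq> fst b, snd a \<noteq> snd b)"

definition pmul :: "'s pauli \<Rightarrow> 's pauli \<Rightarrow> 's pauli" where
  "pmul p q = (\<lambda>k. add1 (p k) (q k))"

definition support :: "'s pauli \<Rightarrow> 's set" where
  "support p = {k. p k \<noteq> (False, False)}"

definition pauli_on :: "'s set \<Rightarrow> 's pauli \<Rightarrow> bool" where
  "pauli_on Q p \<longleftrightarrow> support p \<subseteq> Q"

definition anti1 :: "pauli1 \<Rightarrow> pauli1 \<Rightarrow> bool" where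
  "anti1 a b \<longleftrightarrow> (fst a \<and> snd b) \<noteq> (snd a \<and> fst b)"

definition commute :: "'s set \<Rightarrow> 's pauli \<Rightarrow> 's pauli \<Rightarrow> bool" where
  "commute Q p q \<longleftrightarrow> even (card {k \<in> Q. anti1 (p k) (q k)})"

inductive_set gen :: "'s pauli set \<Rightarrow> 's pauli set" for M where
  gen_id: "pI \<in> gen M"
| gen_mul: "m \<in> M \<Longrightarrow> p \<in> gen M \<Longrightarrow> pmul m p \<in> gen M"

definition centralizer :: "'s set \<Rightarrow> 's pauli set \<Rightarrow> 's pauli set" where
  "centralizer Q H = {s. pauli_on Q s \<and> (\<forall>h\<in>H. commute Q s h)}"

type_synonym pauli2 = "pauli1 \<times> pauli1"

definition add2 :: "pauli2 \<Rightarrow> pauli2 \<Rightarrow> pauli2" where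
  "add2 u v = (add1 (fst u) (fst v), add1 (snd u) (snd v))"

definition omega2 :: "pauli2 \<Rightarrow> pauli2 \<Rightarrow> bool" where
  "omega2 u v \<longleftrightarrow> anti1 (fst u) (fst v) \<noteq> anti1 (snd u) (snd v)"

text \<open>Modulo phases, the conjugation action P |-> U^dagger P U of a two-qubit
  Clifford U is exactly a symplectic F2-linear map on the 4 bits.\<close>
definition symplectic2 :: "(pauli2 \<Rightarrow> pauli2) \<Rightarrow> bool" where
  "symplectic2 S \<longleftrightarrow> (\<forall>u v. S (add2 u v) = add2 (S u) (S v)) \<and>
                      (\<forall>u v. omega2 (S u) (S v) = omega2 u v)"

text \<open>A gate: (first qubit, second qubit, Heisenberg action on the pair).\<close>
type_synonym 's gate = "'s \<times> 's \<times> (pauli2 \<Rightarrow> pauli2)"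

definition gq1 :: "'s gate \<Rightarrow> 's" where "gq1 g = fst g"
definition gq2 :: "'s gate \<Rightarrow> 's" where "gq2 g = fst (snd g)"
definition gop :: "'s gate \<Rightarrow> pauli2 \<Rightarrow> pauli2" where "gop g = snd (snd g)"

text \<open>Action P |-> U_t^dagger P U_t of a layer (set of gates on disjoint pairs).\<close>
definition layer_act :: "'s gate set \<Rightarrow> 's pauli \<Rightarrow> 's pauli" where
  "layer_act L P = (\<lambda>k.
     if \<exists>g\<in>L. k = gq1 g \<or> k = gq2 g then
       (let g = (THE g. g \<in> L \<and> (k = gq1 g \<or> k = gq2 g));
            r = gop g (P (gq1 g), P (gq2 g))
        in if k = gq1 g then fst r else snd r)
     else P k)"

text \<open>heis layers t P = C_t^dagger P C_t where C_t = U_t ... U_1 and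
  layers t is the t-th layer U_t.\<close>
fun heis :: "(nat \<Rightarrow> 's gate set) \<Rightarrow> nat \<Rightarrow> 's pauli \<Rightarrow> 's pauli" where
  "heis layers 0 P = P"
| "heis layers (Suc t) P = heis layers t (layer_act (layers (Suc t)) P)"

text \<open>Sites of the D-dimensional lattice: integer vectors indexed by the finite
  type 'n (D = CARD('n)), in the box [0, L k) in direction k.\<close>
definition lattice :: "('n \<Rightarrow> nat) \<Rightarrow> ('n \<Rightarrow> int) set" where
  "lattice L = {x. \<forall>k. 0 \<le> x k \<and> x k < int (L k)}"

definition l1dist :: "('n::finite \<Rightarrow> int) \<Rightarrow> ('n \<Rightarrow> int) \<Rightarrow> int" where
  "l1dist x y = (\<Sum>k\<in>UNIV. \<bar>x k - y k\<bar>)"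

definition valid_gate :: "('n::finite \<Rightarrow> int) set \<Rightarrow> ('n \<Rightarrow> int) gate \<Rightarrow> bool" where
  "valid_gate Q g \<longleftrightarrow> gq1 g \<in> Q \<and> gq2 g \<in> Q \<and> l1dist (gq1 g) (gq2 g) = 1
                      \<and> symplectic2 (gop g)"

definition valid_layer :: "('n::finite \<Rightarrow> int) set \<Rightarrow> ('n \<Rightarrow> int) gate set \<Rightarrow> bool" where
  "valid_layer Q L \<longleftrightarrow> (\<forall>g\<in>L. valid_gate Q g) \<and>
     (\<forall>g\<in>L. \<forall>h\<in>L. g \<noteq> h \<longrightarrow> {gq1 g, gq2 g} \<inter> {gq1 h, gq2 h} = {})"

definition Mset :: "(nat \<Rightarrow> 's gate set) \<Rightarrow> ('s \<times> nat) set \<Rightarrow> 's pauli set" where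
  "Mset layers b = (\<Union>(i, t)\<in>b. {heis layers t (pX i), heis layers t (pZ i)})"

definition depolarized :: "(nat \<Rightarrow> 's gate set) \<Rightarrow> ('s \<times> nat) set \<Rightarrow> 's \<Rightarrow> bool" where
  "depolarized layers b i \<longleftrightarrow> pX i \<in> gen (Mset layers b) \<and> pZ i \<in> gen (Mset layers b)"

definition blk :: "nat \<Rightarrow> ('n \<Rightarrow> int) \<Rightarrow> ('n \<Rightarrow> int)" where
  "blk d x = (\<lambda>k. x k div (2 * int d))"

definition sublattice :: "nat \<Rightarrow> ('n \<Rightarrow> int) set \<Rightarrow> ('n \<Rightarrow> int) \<Rightarrow> ('n \<Rightarrow> int) set" where
  "sublattice d Q c = {x \<in> Q. blk d x = c}"

definition blocks :: "nat \<Rightarrow> ('n \<Rightarrow> int) set \<Rightarrow> ('n \<Rightarrow> int) set" where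
  "blocks d Q = blk d ` Q"

definition adj :: "('n \<Rightarrow> int) \<Rightarrow> ('n \<Rightarrow> int) \<Rightarrow> bool" where
  "adj c c' \<longleftrightarrow> c \<noteq> c' \<and> (\<forall>k. \<bar>c k - c' k\<bar> \<le> 1)"

definition connected_in :: "('n \<Rightarrow> int) set \<Rightarrow> bool" where
  "connected_in A \<longleftrightarrow> (\<forall>x\<in>A. \<forall>y\<in>A. (x, y) \<in> {(u, v). u \<in> A \<and> v \<in> A \<and> adj u v}\<^sup>*)"

definition component_of :: "('n \<Rightarrow> int) set \<Rightarrow> ('n \<Rightarrow> int) set \<Rightarrow> bool" where
  "component_of W A \<longleftrightarrow> A \<noteq> {} \<and> A \<subseteq> W \<and> connected_in A \<and>
     (\<forall>x\<in>A. \<forall>y\<in>W. adj x y \<longrightarrow> y \<in> A)"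

end

theory Submission
  imports Defs
begin

lemma anti1_add_right: "anti1 a (add1 b c) = (anti1 a b \<noteq> anti1 a c)"
  by (cases a; cases b; cases c) (auto simp: anti1_def add1_def)
lemma anti1_add_left: "anti1 (add1 a b) c = (anti1 a c \<noteq> anti1 b c)"
  by (cases a; cases b; cases c) (auto simp: anti1_def add1_def)
lemma anti1_zero_left[simp]: "\<not> anti1 (False, False) a" by (simp add: anti1_def)
lemma anti1_zero_right[simp]: "\<not> anti1 a (False, False)" by (simp add: anti1_def)

lemma parity_xor:
  assumes "finite Q"
  shows "even (card {k\<in>Q. f k \<noteq> g k}) = (even (card {k\<in>Q. f k}) = even (card {k\<in>Q. g k}))"
  using assms
proof (induction Q rule: finite_induct)
  case empty then show ?case by simp
next
  case (insert x F)
  have e: "\<And>P. {k\<in>insert x F. P k} = (if P x then insert x {k\<in>F. P k} else {k\<in>F. P k})"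
    by auto
  have c: "card {k\<in>insert x F. P k} = (if P x then Suc (card {k\<in>F. P k}) else card {k\<in>F. P k})" for P
  proof (cases "P x")
    case True
    then have "{k\<in>insert x F. P k} = insert x {k\<in>F. P k}" by auto
    then show ?thesis using insert True by simp
  next
    case False
    then have "{k\<in>insert x F. P k} = {k\<in>F. P k}" by auto
    then show ?thesis using False by simp
  qed
  show ?case unfolding c using insert.IH by (cases "f x"; cases "g x") auto
qed

lemma commute_mul_right:
  assumes "finite Q"
  shows "commute Q s (pmul p q) = (commute Q s p = commute Q s q)"
  unfolding commute_def pmul_def anti1_add_right using parity_xor[OF assms] by simp

lemma commute_mul_left:
  assumes "finite Q"
  shows "commute Q (pmul p q) s = (commute Q p s = commute Q q s)"
  unfolding commute_def pmul_def anti1_add_left using parity_xor[OF assms] by simp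

lemma commute_pI[simp]: "commute Q s pI"
  by (simp add: commute_def pI_def)

lemma commute_gen:
  assumes "finite Q" "\<forall>g\<in>M. commute Q s g" "h \<in> gen M"
  shows "commute Q s h"
  using assms(3) by induction (use assms in \<open>auto simp: commute_mul_right\<close>)

lemma gen_mono: "h \<in> gen M \<Longrightarrow> M \<subseteq> N \<Longrightarrow> h \<in> gen N"
  by (induction rule: gen.induct) (auto intro: gen.intros)

lemma pmul_cancel: "pmul g (pmul p g) = p"
  by (auto simp: pmul_def add1_def fun_eq_iff prod_eq_iff)

lemma pmul_cancel2: "pmul u (pmul u v) = v"
  by (auto simp: pmul_def add1_def fun_eq_iff prod_eq_iff)

lemma gen_single: "g \<in> M \<Longrightarrow> g \<in> gen M"
proof -
  assume "g \<in> M"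
  then have "pmul g pI \<in> gen M" by (rule gen_mul) (rule gen_id)
  moreover have "pmul g pI = g" by (rule ext) (simp add: pmul_def pI_def add1_def prod_eq_iff)
  ultimately show ?thesis by simp
qed

lemma support_pmul: "support (pmul p q) \<subseteq> support p \<union> support q"
  by (auto simp: support_def pmul_def add1_def)

lemma pauli_on_pmul: "pauli_on Q p \<Longrightarrow> pauli_on Q q \<Longrightarrow> pauli_on Q (pmul p q)"
  unfolding pauli_on_def using support_pmul[of p q] by blast

lemma dual:
  assumes "finite G" "finite Q"
  shows "\<forall>g\<in>G. pauli_on Q g \<Longrightarrow> pauli_on Q p \<Longrightarrow> p \<notin> gen G \<Longrightarrow>
    \<exists>s. pauli_on Q s \<and> (\<forall>g\<in>G. commute Q s g) \<and> \<not> commute Q s p"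
  using assms(1)
proof (induction G arbitrary: p rule: finite_induct)
  case empty
  have "p \<noteq> pI" using empty gen_id by metis
  then obtain k where k: "p k \<noteq> (False, False)" unfolding pI_def by auto
  then have kQ: "k \<in> Q" using empty unfolding pauli_on_def support_def by auto
  define w where "w = (if fst (p k) then (False, True) else (True, False))"
  define s where "s = (\<lambda>j. if j = k then w else (False, False))"
  have aw: "anti1 w (p k)" using k unfolding w_def anti1_def by (cases "p k") auto
  have "{j\<in>Q. anti1 (s j) (p j)} = {k}" using kQ aw by (auto simp: s_def)
  then have "\<not> commute Q s p" by (simp add: commute_def)
  moreover have "pauli_on Q s" using kQ by (auto simp: pauli_on_def support_def s_def)
  ultimately show ?case by blast
next
  case (insert g G0)
  have pn: "p \<notin> gen G0" using insert.prems gen_mono[of p G0 "insert g G0"] by blast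
  have pgn: "pmul p g \<notin> gen G0"
  proof
    assume "pmul p g \<in> gen G0"
    then have "pmul p g \<in> gen (insert g G0)" using gen_mono by blast
    then have "pmul g (pmul p g) \<in> gen (insert g G0)" by (rule gen_mul[rotated]) simp
    then show False using insert.prems pmul_cancel by metis
  qed
  have gQ: "pauli_on Q g" "\<forall>h\<in>G0. pauli_on Q h" using insert.prems by auto
  obtain s1 where s1: "pauli_on Q s1" "\<forall>h\<in>G0. commute Q s1 h" "\<not> commute Q s1 p"
    using insert.IH[OF gQ(2) insert.prems(2) pn] by blast
  obtain s2 where s2: "pauli_on Q s2" "\<forall>h\<in>G0. commute Q s2 h" "\<not> commute Q s2 (pmul p g)"
    using insert.IH[OF gQ(2) pauli_on_pmul[OF insert.prems(2) gQ(1)] pgn] by blast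
  show ?case
  proof (cases "commute Q s1 g")
    case True then show ?thesis using s1 by blast
  next
    case f1: False
    show ?thesis
    proof (cases "commute Q s2 g")
      case True
      then have "\<not> commute Q s2 p" using s2(3) commute_mul_right[OF assms(2)] by blast
      then show ?thesis using s2 True by blast
    next
      case False
      have "pauli_on Q (pmul s1 s2)" using s1 s2 pauli_on_pmul by blast
      moreover have "\<forall>h\<in>insert g G0. commute Q (pmul s1 s2) h"
        using s1 s2 f1 False commute_mul_left[OF assms(2)] by auto
      moreover have "\<not> commute Q (pmul s1 s2) p"
        using s1 s2 f1 False commute_mul_left[OF assms(2)] commute_mul_right[OF assms(2)] by metis
      ultimately show ?thesis by blast
    qed
  qed
qed

definition near :: "int \<Rightarrow> ('n \<Rightarrow> int) \<Rightarrow> ('n \<Rightarrow> int) \<Rightarrow> bool" where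
  "near r x y \<longleftrightarrow> (\<forall>k. \<bar>x k - y k\<bar> \<le> r)"

lemma near_trans: "near r x y \<Longrightarrow> near r' y z \<Longrightarrow> near (r + r') x z"
  unfolding near_def
proof (intro allI)
  fix k
  assume "\<forall>k. \<bar>x k - y k\<bar> \<le> r" "\<forall>k. \<bar>y k - z k\<bar> \<le> r'"
  then have "\<bar>x k - y k\<bar> \<le> r" "\<bar>y k - z k\<bar> \<le> r'" by auto
  then show "\<bar>x k - z k\<bar> \<le> r + r'" by arith
qed

lemma near_sym: "near r x y \<Longrightarrow> near r y x"
  unfolding near_def by (simp add: abs_minus_commute)

lemma near_mono: "near r x y \<Longrightarrow> r \<le> r' \<Longrightarrow> near r' x y"
  unfolding near_def using order_trans by blast

lemma l1_near: "l1dist x y = 1 \<Longrightarrow> near 1 (x::'n::finite \<Rightarrow> int) y"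
  unfolding near_def l1dist_def
proof
  fix k assume "(\<Sum>k\<in>UNIV. \<bar>x k - y k\<bar>) = 1"
  moreover have "\<bar>x k - y k\<bar> \<le> (\<Sum>k\<in>UNIV. \<bar>x k - y k\<bar>)"
    by (rule member_le_sum) auto
  ultimately show "\<bar>x k - y k\<bar> \<le> 1" by simp
qed

lemma symp_zero:
  assumes "symplectic2 S" shows "S ((False,False),(False,False)) = ((False,False),(False,False))"
proof -
  let ?z = "((False,False),(False,False))"
  have "S (add2 ?z ?z) = add2 (S ?z) (S ?z)" using assms unfolding symplectic2_def by blast
  moreover have "add2 ?z ?z = ?z" by (simp add: add2_def add1_def)
  moreover have "add2 u u = ?z" for u by (simp add: add2_def add1_def)
  ultimately show ?thesis by simp
qed

lemma layer_support:
  assumes "valid_layer Q L" "y \<in> support (layer_act L P)"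
  shows "y \<in> support P \<or> (y \<in> Q \<and> (\<exists>x\<in>support P. near 1 x y))"
proof (cases "\<exists>g\<in>L. y = gq1 g \<or> y = gq2 g")
  case False
  have "layer_act L P y = P y" unfolding layer_act_def using False by simp
  then show ?thesis using assms(2) by (simp add: support_def)
next
  case True
  then obtain g0 where g0: "g0 \<in> L" "y = gq1 g0 \<or> y = gq2 g0" by blast
  have disj: "\<forall>g\<in>L. \<forall>h\<in>L. g \<noteq> h \<longrightarrow> {gq1 g, gq2 g} \<inter> {gq1 h, gq2 h} = {}"
    using assms(1) unfolding valid_layer_def by (rule conjunct2)
  have uniq: "g = g0" if "g \<in> L" "y = gq1 g \<or> y = gq2 g" for g
  proof (rule ccontr)
    assume "g \<noteq> g0"
    then have "{gq1 g, gq2 g} \<inter> {gq1 g0, gq2 g0} = {}" by (rule disj[rule_format, OF that(1) g0(1)])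
    moreover have "y \<in> {gq1 g, gq2 g} \<inter> {gq1 g0, gq2 g0}" using that(2) g0(2) by blast
    ultimately show False by blast
  qed
  have the: "(THE g. g \<in> L \<and> (y = gq1 g \<or> y = gq2 g)) = g0"
  proof (rule the_equality)
    show "g0 \<in> L \<and> (y = gq1 g0 \<or> y = gq2 g0)" by (rule conjI[OF g0(1) g0(2)])
  next
    fix g assume h: "g \<in> L \<and> (y = gq1 g \<or> y = gq2 g)"
    show "g = g0" by (rule uniq[OF conjunct1[OF h] conjunct2[OF h]])
  qed
  define r where "r = gop g0 (P (gq1 g0), P (gq2 g0))"
  have val: "layer_act L P y = (if y = gq1 g0 then fst r else snd r)"
    unfolding layer_act_def by (simp only: if_P[OF True] the Let_def r_def)
  have vg: "valid_gate Q g0" using assms(1) g0(1) unfolding valid_layer_def by blast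
  have nz: "P (gq1 g0) \<noteq> (False,False) \<or> P (gq2 g0) \<noteq> (False,False)"
  proof (rule ccontr)
    assume "\<not> ?thesis"
    then have z: "P (gq1 g0) = (False,False)" "P (gq2 g0) = (False,False)" by auto
    have "symplectic2 (gop g0)" using vg unfolding valid_gate_def by blast
    then have "r = ((False,False),(False,False))"
      unfolding r_def z by (rule symp_zero)
    then have "layer_act L P y = (False,False)" using val by simp
    then show False using assms(2) by (simp add: support_def)
  qed
  have l1: "l1dist (gq1 g0) (gq2 g0) = 1" using vg unfolding valid_gate_def by blast
  have n1a: "near 1 (gq1 g0) (gq2 g0)" by (rule l1_near[OF l1])
  have n1: "near 1 (gq1 g0) (gq2 g0)" "near 1 (gq2 g0) (gq1 g0)"
    using n1a near_sym[OF n1a] by auto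
  have n0: "near 1 z z" for z :: "'a \<Rightarrow> int" by (simp add: near_def)
  have yQ: "y \<in> Q" using vg g0 unfolding valid_gate_def by auto
  have "\<exists>x\<in>support P. near 1 x y"
  proof (cases "P (gq1 g0) \<noteq> (False,False)")
    case True
    then have "gq1 g0 \<in> support P" by (simp add: support_def)
    moreover have "near 1 (gq1 g0) y" using g0(2) n1(1) n0[of "gq1 g0"] by (elim disjE) simp_all
    ultimately show ?thesis by blast
  next
    case False
    then have "gq2 g0 \<in> support P" using nz by (simp add: support_def)
    moreover have "near 1 (gq2 g0) y" using g0(2) n1(2) n0[of "gq2 g0"] by (elim disjE) simp_all
    ultimately show ?thesis by blast
  qed
  then show ?thesis using yQ by blast
qed

lemma heis_support:
  assumes "\<forall>t\<in>{1..d}. valid_layer Q (layers t)"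
  shows "t \<le> d \<Longrightarrow> y \<in> support (heis layers t P) \<Longrightarrow> (\<exists>x\<in>support P. near (int t) x y)
      \<and> (support P \<subseteq> Q \<longrightarrow> y \<in> Q)"
proof (induction t arbitrary: P y)
  case 0
  have "near (int 0) y y" by (simp add: near_def)
  then show ?case using 0 by auto
next
  case (Suc t)
  let ?P' = "layer_act (layers (Suc t)) P"
  have vl: "valid_layer Q (layers (Suc t))" using assms Suc.prems(1) by simp
  have tle: "t \<le> d" using Suc.prems(1) by simp
  have yin: "y \<in> support (heis layers t ?P')" using Suc.prems(2) by simp
  have IH: "(\<exists>x\<in>support ?P'. near (int t) x y) \<and> (support ?P' \<subseteq> Q \<longrightarrow> y \<in> Q)"
    by (rule Suc.IH[OF tle yin])
  then obtain x where x: "x \<in> support ?P'" "near (int t) x y" by blast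
  have xq: "support ?P' \<subseteq> Q \<longrightarrow> y \<in> Q" using IH by (rule conjunct2)
  have A: "\<exists>x\<in>support P. near (int (Suc t)) x y"
    using layer_support[OF vl x(1)]
  proof
    assume xs: "x \<in> support P"
    moreover have "near (int (Suc t)) x y" using x(2) by (rule near_mono) simp
    ultimately show ?thesis by blast
  next
    assume "x \<in> Q \<and> (\<exists>x'\<in>support P. near 1 x' x)"
    then obtain x' where x': "x' \<in> support P" "near 1 x' x" by blast
    have "near (1 + int t) x' y" by (rule near_trans[OF x'(2) x(2)])
    then have "near (int (Suc t)) x' y" by simp
    then show ?thesis using x'(1) by blast
  qed
  have B: "support P \<subseteq> Q \<longrightarrow> support ?P' \<subseteq> Q"
  proof (intro impI subsetI)
    fix z assume PQ: "support P \<subseteq> Q" and z: "z \<in> support ?P'"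
    from layer_support[OF vl z] show "z \<in> Q"
    proof
      assume "z \<in> support P" then show ?thesis using PQ by (rule subsetD[rotated])
    next
      assume "z \<in> Q \<and> (\<exists>x\<in>support P. near 1 x z)" then show ?thesis by (rule conjunct1)
    qed
  qed
  show ?case using A B xq by blast
qed

lemma div_close:
  fixes a b m :: int
  assumes "0 < m" "\<bar>a - b\<bar> \<le> m"
  shows "\<bar>a div m - b div m\<bar> \<le> 1"
proof -
  have e: "x = x div m * m + x mod m" for x by (rule div_mult_mod_eq[symmetric])
  have r: "0 \<le> x mod m" "x mod m < m" for x using assms(1) by simp_all
  have a1: "a div m * m \<le> a" "a < (a div m + 1) * m"
    using e[of a] r[of a] by (simp_all only: distrib_right mult_1_left; linarith)+
  have b1: "b div m * m \<le> b" "b < (b div m + 1) * m"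
    using e[of b] r[of b] by (simp_all only: distrib_right mult_1_left; linarith)+
  show ?thesis
  proof (rule ccontr)
    assume "\<not> ?thesis"
    then have "a div m \<ge> b div m + 2 \<or> b div m \<ge> a div m + 2" by linarith
    then show False
    proof
      assume h: "a div m \<ge> b div m + 2"
      then have "a div m * m \<ge> (b div m + 2) * m" using assms(1) by (simp add: mult_right_mono)
      then show False using a1 b1 assms(2) by (simp add: algebra_simps; linarith)
    next
      assume h: "b div m \<ge> a div m + 2"
      then have "b div m * m \<ge> (a div m + 2) * m" using assms(1) by (simp add: mult_right_mono)
      then show False using a1 b1 assms(2) by (simp add: algebra_simps; linarith)
    qed
  qed
qed

lemma avg:
  fixes P :: "'u \<Rightarrow> 'c \<Rightarrow> bool"
  assumes "finite U" "finite A" "A \<noteq> {}" "U \<noteq> {}"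
    and "\<forall>c\<in>A. card U \<le> 2 * card {u\<in>U. P u c}"
  shows "\<exists>u\<in>U. card A \<le> 2 * card {c\<in>A. P u c}"
proof (rule ccontr)
  assume "\<not> ?thesis"
  then have lt: "\<forall>u\<in>U. 2 * card {c\<in>A. P u c} \<le> card A - 1" by force
  have ce1: "card {c\<in>A. P u c} = (\<Sum>c\<in>A. if P u c then 1 else 0)" for u
    using sum.inter_filter[OF assms(2), of "\<lambda>_. 1::nat" "P u"] by simp
  have ce2: "card {u\<in>U. P u c} = (\<Sum>u\<in>U. if P u c then 1 else 0)" for c
    using sum.inter_filter[OF assms(1), of "\<lambda>_. 1::nat" "\<lambda>u. P u c"] by simp
  have sw: "(\<Sum>u\<in>U. card {c\<in>A. P u c}) = (\<Sum>c\<in>A. card {u\<in>U. P u c})"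
    unfolding ce1 ce2 by (rule sum.swap)
  have "2 * (\<Sum>u\<in>U. card {c\<in>A. P u c}) = (\<Sum>u\<in>U. 2 * card {c\<in>A. P u c})"
    by (simp add: sum_distrib_left)
  also have "\<dots> \<le> (\<Sum>u\<in>U. card A - 1)" using lt by (intro sum_mono) auto
  also have "\<dots> = card U * (card A - 1)" by simp
  finally have up: "2 * (\<Sum>u\<in>U. card {c\<in>A. P u c}) \<le> card U * (card A - 1)" .
  have "card A * card U = (\<Sum>c\<in>A. card U)" by simp
  also have "\<dots> \<le> (\<Sum>c\<in>A. 2 * card {u\<in>U. P u c})" using assms(5) by (intro sum_mono) auto
  also have "\<dots> = 2 * (\<Sum>c\<in>A. card {u\<in>U. P u c})" by (simp add: sum_distrib_left)
  finally have lo: "card A * card U \<le> 2 * (\<Sum>u\<in>U. card {c\<in>A. P u c})" using sw by simp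
  have "card A > 0" "card U > 0" using assms by auto
  then have "card U * (card A - 1) < card A * card U"
    by (simp add: diff_mult_distrib2 mult.commute)
  then show False using up lo by linarith
qed

lemma half:
  assumes "finite U" "\<forall>u\<in>U. \<forall>v\<in>U. pmul u v \<in> U" "u0 \<in> U" "support u0 \<inter> S \<noteq> {}"
  shows "card U \<le> 2 * card {u\<in>U. support u \<inter> S \<noteq> {}}"
proof -
  let ?H = "{u\<in>U. support u \<inter> S \<noteq> {}}"
  let ?N = "{u\<in>U. \<not> support u \<inter> S \<noteq> {}}"
  have inj: "inj_on (pmul u0) ?N"
    by (rule inj_onI) (metis pmul_cancel2)
  have img: "pmul u0 ` ?N \<subseteq> ?H"
  proof
    fix w assume "w \<in> pmul u0 ` ?N"
    then obtain u where u: "u \<in> U" "support u \<inter> S = {}" "w = pmul u0 u" by auto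
    obtain k where k: "k \<in> support u0" "k \<in> S" using assms(4) by blast
    have "u k = (False, False)" using u k unfolding support_def by auto
    then have "w k \<noteq> (False, False)" using k u unfolding support_def pmul_def add1_def
      by (auto simp: prod_eq_iff)
    then show "w \<in> ?H" using u k assms(2,3) unfolding support_def by auto
  qed
  have "card ?N \<le> card ?H"
    using card_inj_on_le[OF inj img] assms(1) by simp
  moreover have "card U = card ?H + card ?N"
  proof -
    have eq: "U = ?H \<union> ?N" by blast
    have fin: "finite ?H" "finite ?N" using assms(1) by auto
    have "card (?H \<union> ?N) = card ?H + card ?N"
      by (rule card_Un_disjoint) (use fin in auto)
    moreover have "card U = card (?H \<union> ?N)" using eq by (rule arg_cong)
    ultimately show ?thesis by linarith
  qed
  ultimately show ?thesis by linarith
qed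

theorem lemma3:
  fixes L :: "'n::finite \<Rightarrow> nat"
    and d :: nat
    and layers :: "nat \<Rightarrow> ('n \<Rightarrow> int) gate set"
    and b :: "(('n \<Rightarrow> int) \<times> nat) set"
    and A :: "('n \<Rightarrow> int) set"
  defines "Q \<equiv> lattice L"
  defines "W \<equiv> {c \<in> blocks d Q. \<exists>i \<in> sublattice d Q c. \<not> depolarized layers b i}"
  assumes d_pos: "0 < d"
    and L_div: "\<forall>k. (2 * d) dvd L k"
    and layers_valid: "\<forall>t\<in>{1..d}. valid_layer Q (layers t)"
    and b_locs: "b \<subseteq> Q \<times> {0..d}"
    and A_comp: "component_of W A"
    and A_largest: "\<forall>B. component_of W B \<longrightarrow> card B \<le> card A"
  shows "\<exists>s \<in> centralizer Q (gen (Mset layers b)).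
           card A \<le> 2 * card {c \<in> A. support s \<inter> sublattice d Q c \<noteq> {}}
         \<and> support s \<subseteq> (\<Union>c\<in>A. sublattice d Q c)"
proof -
  define M where "M = Mset layers b"
  define U where "U = {s \<in> centralizer Q (gen M). support s \<subseteq> (\<Union>c\<in>A. sublattice d Q c)}"
  have finQ: "finite Q"
  proof -
    define B where "B = (\<Union>k. {0..<int (L k)})"
    have fB: "finite B" unfolding B_def by (intro finite_UN_I) auto
    have "Q \<subseteq> {f. \<forall>x. (x \<in> UNIV \<longrightarrow> f x \<in> B) \<and> (x \<notin> UNIV \<longrightarrow> f x = 0)}"
      unfolding Q_def lattice_def B_def by auto
    then show ?thesis using finite_set_of_finite_funs[OF finite_UNIV fB] by (rule finite_subset)
  qed
  have finb: "finite b" using b_locs by (rule finite_subset) (simp add: finQ)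
  have finM: "finite M" unfolding M_def Mset_def using finb
    by (intro finite_UN_I) (auto simp: case_prod_beta)
  have genM: "support g \<subseteq> Q \<and> (\<exists>i. \<forall>y\<in>support g. near (int d) i y)" if "g \<in> M" for g
  proof -
    from that obtain i t where it: "(i,t) \<in> b" "g = heis layers t (pX i) \<or> g = heis layers t (pZ i)"
      unfolding M_def Mset_def by blast
    have iQ: "i \<in> Q" and td: "t \<le> d" using it(1) b_locs by auto
    have sX: "support (pX i) = {i}" "support (pZ i) = {i}" by (auto simp: support_def pX_def pZ_def)
    obtain P where P: "g = heis layers t P" "support P = {i}" using it(2) sX by blast
    have hs: "(\<exists>x\<in>support P. near (int t) x y) \<and> (support P \<subseteq> Q \<longrightarrow> y \<in> Q)" if "y \<in> support g" for y
      using heis_support[OF layers_valid td] that P(1) by blast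
    show ?thesis
    proof
      show "support g \<subseteq> Q"
      proof
        fix y assume "y \<in> support g"
        from hs[OF this] have "support P \<subseteq> Q \<longrightarrow> y \<in> Q" by (rule conjunct2)
        moreover have "support P \<subseteq> Q" using P(2) iQ by simp
        ultimately show "y \<in> Q" by (rule mp)
      qed
      show "\<exists>i. \<forall>y\<in>support g. near (int d) i y"
      proof (intro exI ballI)
        fix y assume "y \<in> support g"
        from hs[OF this] have "\<exists>x\<in>support P. near (int t) x y" by (rule conjunct1)
        then have "near (int t) i y" using P(2) by simp
        then show "near (int d) i y" by (rule near_mono) (simp add: td)
      qed
    qed
  qed
  have depn: "depolarized layers b z"
    if z: "z \<in> Q" "blk d z \<notin> A" and y: "y \<in> Q" "blk d y \<in> A" and nyz: "near (2 * int d) y z" for y z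
  proof (rule ccontr)
    assume nd: "\<not> depolarized layers b z"
    have zs: "z \<in> sublattice d Q (blk d z)" using z(1) unfolding sublattice_def by simp
    have zb: "blk d z \<in> blocks d Q" using z(1) unfolding blocks_def by (rule imageI)
    have zW: "blk d z \<in> W" unfolding W_def using zs zb nd by blast
    have ad: "adj (blk d y) (blk d z)"
      unfolding adj_def
    proof
      show "blk d y \<noteq> blk d z" using z(2) y(2) by metis
      show "\<forall>k. \<bar>blk d y k - blk d z k\<bar> \<le> 1"
      proof
        fix k
        have "\<bar>y k - z k\<bar> \<le> 2 * int d" using nyz unfolding near_def by blast
        moreover have "0 < 2 * int d" using d_pos by simp
        ultimately show "\<bar>blk d y k - blk d z k\<bar> \<le> 1" unfolding blk_def using div_close by blast
      qed
    qed
    have "\<forall>x\<in>A. \<forall>y\<in>W. adj x y \<longrightarrow> y \<in> A" using A_comp unfolding component_of_def by blast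
    then have "blk d z \<in> A" using y(2) zW ad by blast
    then show False using z(2) by contradiction
  qed
  have cz: "s z = (False, False)" if sc: "s \<in> centralizer Q (gen M)" and zq: "z \<in> Q"
    and zd: "depolarized layers b z" for s z
  proof -
    have "pX z \<in> gen M" "pZ z \<in> gen M" using zd unfolding depolarized_def M_def by blast+
    then have cX: "commute Q s (pX z)" and cZ: "commute Q s (pZ z)"
      using sc unfolding centralizer_def by blast+
    have e1: "{k\<in>Q. anti1 (s k) (pX z k)} = (if snd (s z) then {z} else {})"
      using zq by (auto simp: pX_def anti1_def)
    have e2: "{k\<in>Q. anti1 (s k) (pZ z k)} = (if fst (s z) then {z} else {})"
      using zq by (auto simp: pZ_def anti1_def)
    have "\<not> snd (s z)" using cX e1 unfolding commute_def by (auto split: if_splits)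
    moreover have "\<not> fst (s z)" using cZ e2 unfolding commute_def by (auto split: if_splits)
    ultimately show ?thesis by (cases "s z") simp
  qed
  have restr: "(\<lambda>k. if blk d k \<in> A then s k else (False,False)) \<in> U"
    if sC: "s \<in> centralizer Q (gen M)" for s
  proof -
    define s' where "s' = (\<lambda>k. if blk d k \<in> A then s k else (False,False))"
    have sQ: "support s \<subseteq> Q" using sC unfolding centralizer_def pauli_on_def by blast
    have sup: "support s' \<subseteq> (\<Union>c\<in>A. sublattice d Q c)"
    proof
      fix k assume k: "k \<in> support s'"
      then have kA: "blk d k \<in> A" and ks: "k \<in> support s" unfolding s'_def support_def by (auto split: if_splits)
      have "k \<in> sublattice d Q (blk d k)" using ks sQ unfolding sublattice_def by blast
      then show "k \<in> (\<Union>c\<in>A. sublattice d Q c)" using kA by blast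
    qed
    have comm: "commute Q s' g" if gM: "g \<in> M" for g
    proof (cases "\<exists>y\<in>Q. blk d y \<in> A \<and> y \<in> support g")
      case True
      then obtain y where y: "y \<in> Q" "blk d y \<in> A" "y \<in> support g" by blast
      obtain i where i: "\<forall>y\<in>support g. near (int d) i y" using genM[OF gM] by blast
      have pw: "anti1 (s' k) (g k) = anti1 (s k) (g k)" if kQ: "k \<in> Q" for k
      proof (cases "blk d k \<in> A")
        case True then show ?thesis by (simp add: s'_def)
      next
        case kA: False
        show ?thesis
        proof (cases "k \<in> support g")
          case True
          have "near (int d) y i" using near_sym i y(3) by blast
          moreover have "near (int d) i k" using i True by blast
          ultimately have "near (int d + int d) y k" by (rule near_trans)
          then have nk: "near (2 * int d) y k" by simp
          have "depolarized layers b k" by (rule depn[OF kQ kA y(1) y(2) nk])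
          then have "s k = (False,False)" by (rule cz[OF sC kQ])
          then show ?thesis using kA by (simp add: s'_def)
        next
          case False
          then have "g k = (False,False)" by (simp add: support_def)
          then show ?thesis by simp
        qed
      qed
      have "{k\<in>Q. anti1 (s' k) (g k)} = {k\<in>Q. anti1 (s k) (g k)}" using pw by blast
      moreover have "commute Q s g" using sC gen_single[OF gM] unfolding centralizer_def by blast
      ultimately show ?thesis unfolding commute_def by simp
    next
      case False
      have na: "\<not> anti1 (s' k) (g k)" if kQ: "k \<in> Q" for k
      proof (cases "blk d k \<in> A")
        case True
        then have "k \<notin> support g" using False kQ by blast
        then have "g k = (False,False)" by (simp add: support_def)
        then show ?thesis by simp
      next
        case False then show ?thesis by (simp add: s'_def)
      qed
      have e: "{k\<in>Q. anti1 (s' k) (g k)} = {}" using na by blast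
      show ?thesis unfolding commute_def e by simp
    qed
    have "s' \<in> centralizer Q (gen M)"
      unfolding centralizer_def pauli_on_def
    proof (intro CollectI conjI ballI)
      show "support s' \<subseteq> Q" using sup unfolding sublattice_def by blast
      fix h assume "h \<in> gen M"
      then show "commute Q s' h" using commute_gen[OF finQ] comm by blast
    qed
    then have "s' \<in> U" using sup unfolding U_def by blast
    then show ?thesis unfolding s'_def .
  qed
  have hit: "\<exists>u\<in>U. support u \<inter> sublattice d Q c \<noteq> {}" if cA: "c \<in> A" for c
  proof -
    have "A \<subseteq> W" using A_comp unfolding component_of_def by blast
    then have "c \<in> W" using cA by blast
    then obtain i where i: "i \<in> sublattice d Q c" "\<not> depolarized layers b i" unfolding W_def by blast
    have iQ: "i \<in> Q" and bi: "blk d i = c" using i(1) unfolding sublattice_def by auto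
    obtain p where p: "p = pX i \<or> p = pZ i" "p \<notin> gen M" using i(2) unfolding depolarized_def M_def by blast
    have Mon: "\<forall>g\<in>M. pauli_on Q g" using genM unfolding pauli_on_def by blast
    have "support (pX i) = {i}" "support (pZ i) = {i}" by (auto simp: support_def pX_def pZ_def)
    then have "support p = {i}" using p(1) by blast
    then have pon: "pauli_on Q p" using iQ by (simp add: pauli_on_def)
    obtain s where s: "pauli_on Q s" "\<forall>g\<in>M. commute Q s g" "\<not> commute Q s p"
      using dual[OF finM finQ Mon pon p(2)] by blast
    have sC: "s \<in> centralizer Q (gen M)" unfolding centralizer_def using s(1) commute_gen[OF finQ s(2)] by blast
    have si: "s i \<noteq> (False,False)"
    proof
      assume z: "s i = (False,False)"
      have "\<not> anti1 (s k) (p k)" for k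
      proof (cases "k = i")
        case True then show ?thesis using z by simp
      next
        case False then have "p k = (False,False)" using p(1) by (auto simp: pX_def pZ_def)
        then show ?thesis by simp
      qed
      then have e: "{k\<in>Q. anti1 (s k) (p k)} = {}" by blast
      show False using s(3) unfolding commute_def e by simp
    qed
    let ?u = "\<lambda>k. if blk d k \<in> A then s k else (False,False)"
    have "?u \<in> U" by (rule restr[OF sC])
    moreover have "i \<in> support ?u" using si bi cA by (simp add: support_def)
    ultimately show ?thesis using i(1) by blast
  qed
  have Ufin: "finite U"
  proof (rule finite_subset)
    show "U \<subseteq> {f. \<forall>x. (x \<in> Q \<longrightarrow> f x \<in> UNIV) \<and> (x \<notin> Q \<longrightarrow> f x = (False,False))}"
      unfolding U_def centralizer_def pauli_on_def support_def by blast
    show "finite {f. \<forall>x. (x \<in> Q \<longrightarrow> f x \<in> UNIV) \<and> (x \<notin> Q \<longrightarrow> f x = (False,False))}"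
      by (rule finite_set_of_finite_funs[OF finQ]) simp
  qed
  have Umul: "\<forall>u\<in>U. \<forall>v\<in>U. pmul u v \<in> U"
  proof (intro ballI)
    fix u v assume u: "u \<in> U" and v: "v \<in> U"
    have "pauli_on Q u" "pauli_on Q v" using u v unfolding U_def centralizer_def by blast+
    then have "pauli_on Q (pmul u v)" by (rule pauli_on_pmul)
    moreover have "commute Q (pmul u v) h" if "h \<in> gen M" for h
    proof -
      have "commute Q u h" "commute Q v h" using u v that unfolding U_def centralizer_def by blast+
      then show ?thesis by (simp add: commute_mul_left[OF finQ])
    qed
    moreover have "support (pmul u v) \<subseteq> (\<Union>c\<in>A. sublattice d Q c)"
    proof -
      have "support u \<subseteq> (\<Union>c\<in>A. sublattice d Q c)" "support v \<subseteq> (\<Union>c\<in>A. sublattice d Q c)"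
        using u v unfolding U_def by blast+
      then show ?thesis using support_pmul[of u v] by blast
    qed
    ultimately show "pmul u v \<in> U" unfolding U_def centralizer_def by blast
  qed
  have UpI: "pI \<in> U"
  proof -
    have sp: "support (pI :: ('n \<Rightarrow> int) pauli) = {}" by (simp add: support_def pI_def)
    have "pI \<in> centralizer Q (gen M)" unfolding centralizer_def pauli_on_def
      by (simp add: commute_def pI_def support_def)
    then show ?thesis unfolding U_def by (simp add: support_def pI_def)
  qed
  have finA: "finite A"
  proof (rule finite_subset)
    show "A \<subseteq> blocks d Q" using A_comp unfolding component_of_def W_def by blast
    show "finite (blocks d Q)" unfolding blocks_def using finQ by (rule finite_imageI)
  qed
  have Ane: "A \<noteq> {}" using A_comp unfolding component_of_def by blast
  have Une: "U \<noteq> {}" using UpI by blast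
  have hh: "\<forall>c\<in>A. card U \<le> 2 * card {u\<in>U. support u \<inter> sublattice d Q c \<noteq> {}}"
  proof
    fix c assume "c \<in> A"
    then obtain u0 where "u0 \<in> U" "support u0 \<inter> sublattice d Q c \<noteq> {}" using hit by blast
    then show "card U \<le> 2 * card {u\<in>U. support u \<inter> sublattice d Q c \<noteq> {}}"
      by (rule half[OF Ufin Umul])
  qed
  obtain u where u: "u \<in> U" "card A \<le> 2 * card {c\<in>A. support u \<inter> sublattice d Q c \<noteq> {}}"
    using avg[of U A "\<lambda>u c. support u \<inter> sublattice d Q c \<noteq> {}", OF Ufin finA Ane Une hh] by blast
  show ?thesis using u unfolding U_def M_def by blast
qed

end
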